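(* Let $f(x)=\sum_{k=0}^{\infty}x^ka_k$, $a_k\in\mathbb{O}$, be a slice regular function on $\mathbb{B}$ such that $f(\mathbb{B})\subset\Pi:=\{x\in\mathbb{O}:\mathrm{Re}(x)\le1\}$, and assume $a_0=f(0)$ is real with $a_0\in[0,1)$. Then $$\mathcal{E}_f(x):=\sum_{k=0}^{\infty}|x^ka_k|+\left(\frac{1}{1+a_0}+\frac{|x|}{1-|x|}\right)\sum_{k=1}^{\infty}|x^ka_k|^2\le1$$ for all $x\in\mathbb{B}$ with $|x|\le R_*$, where $R_*\approx0.24683$ is the unique root in $(0,1)$ of $3r^3-5r^2-3r+1=0$. The constant $R_*$ cannot be improved: for every $r\in(R_*,1)$ there exist such an $f$ and $x$ with $|x|=r$ and $\mathcal{E}_f(x)>1$.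
   Context: $\mathbb{O}$ denotes the real algebra of octonions (the 8-dimensional non-commutative, non-associative but alternative normed division algebra over $\mathbb{R}$), with modulus $|x|=\sqrt{x\overline{x}}$ equal to the Euclidean norm on $\mathbb{R}^8$; the modulus is multiplicative, $|xy|=|x||y|$. For $x\in\mathbb{O}$, $\mathrm{Re}(x)=(x+\overline{x})/2$. $\mathbb{B}=\{x\in\mathbb{O}:|x|<1\}$ is the open unit ball. A slice regular function on $\mathbb{B}$ is (equivalently) a function of the form $f(x)=\sum_{k=0}^{\infty}x^ka_k$ with coefficients $a_k\in\mathbb{O}$ placed on the right, the series converging for every $x\in\mathbb{B}$ (the powers $x^k$ are unambiguous since $\mathbb{O}$ is alternative). *)

theory Defs
  imports "HOL-Analysis.Analysis"
begin

datatype quat = Q real real real real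

fun qmult :: "quat \<Rightarrow> quat \<Rightarrow> quat" where
  "qmult (Q a1 b1 c1 d1) (Q a2 b2 c2 d2) =
     Q (a1*a2 - b1*b2 - c1*c2 - d1*d2)
       (a1*b2 + b1*a2 + c1*d2 - d1*c2)
       (a1*c2 - b1*d2 + c1*a2 + d1*b2)
       (a1*d2 + b1*c2 - c1*b2 + d1*a2)"

fun qconj :: "quat \<Rightarrow> quat" where
  "qconj (Q a b c d) = Q a (-b) (-c) (-d)"

fun qadd :: "quat \<Rightarrow> quat \<Rightarrow> quat" where
  "qadd (Q a1 b1 c1 d1) (Q a2 b2 c2 d2) = Q (a1+a2) (b1+b2) (c1+c2) (d1+d2)"

fun qsub :: "quat \<Rightarrow> quat \<Rightarrow> quat" where
  "qsub (Q a1 b1 c1 d1) (Q a2 b2 c2 d2) = Q (a1-a2) (b1-b2) (c1-c2) (d1-d2)"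

text \<open>Octonions via the Cayley--Dickson construction:
  (a,b)(c,d) = (ac - d^* b, da + b c^*).\<close>
datatype octo = Oct quat quat

fun omult :: "octo \<Rightarrow> octo \<Rightarrow> octo" where
  "omult (Oct a b) (Oct c d) =
     Oct (qsub (qmult a c) (qmult (qconj d) b)) (qadd (qmult d a) (qmult b (qconj c)))"

definition oone :: octo where
  "oone = Oct (Q 1 0 0 0) (Q 0 0 0 0)"

definition oct_of_real :: "real \<Rightarrow> octo" where
  "oct_of_real r = Oct (Q r 0 0 0) (Q 0 0 0 0)"

text \<open>Powers x^k (unambiguous since octonions are alternative / power-associative).\<close>
fun opow :: "octo \<Rightarrow> nat \<Rightarrow> octo" where
  "opow x 0 = oone"
| "opow x (Suc n) = omult x (opow x n)"

fun ocomp :: "octo \<Rightarrow> nat \<Rightarrow> real" where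
  "ocomp (Oct (Q a0 a1 a2 a3) (Q a4 a5 a6 a7)) i =
     (if i = 0 then a0 else if i = 1 then a1 else if i = 2 then a2 else if i = 3 then a3
      else if i = 4 then a4 else if i = 5 then a5 else if i = 6 then a6 else a7)"

definition mk_oct :: "(nat \<Rightarrow> real) \<Rightarrow> octo" where
  "mk_oct g = Oct (Q (g 0) (g 1) (g 2) (g 3)) (Q (g 4) (g 5) (g 6) (g 7))"

definition onorm :: "octo \<Rightarrow> real" where
  "onorm x = sqrt (\<Sum>i<8. (ocomp x i)^2)"

definition ore :: "octo \<Rightarrow> real" where
  "ore x = ocomp x 0"

definition slice_regular_series :: "(nat \<Rightarrow> octo) \<Rightarrow> bool" where
  "slice_regular_series a \<longleftrightarrow>
     (\<forall>x. onorm x < 1 \<longrightarrow> (\<forall>i<8. summable (\<lambda>k. ocomp (omult (opow x k) (a k)) i)))"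

definition oseries :: "(nat \<Rightarrow> octo) \<Rightarrow> octo \<Rightarrow> octo" where
  "oseries a x = mk_oct (\<lambda>i. \<Sum>k. ocomp (omult (opow x k) (a k)) i)"

definition Ecal :: "(nat \<Rightarrow> octo) \<Rightarrow> real \<Rightarrow> octo \<Rightarrow> real" where
  "Ecal a a0 x =
     (\<Sum>k. onorm (omult (opow x k) (a k)))
     + (1 / (1 + a0) + onorm x / (1 - onorm x)) * (\<Sum>k. (onorm (omult (opow x (Suc k)) (a (Suc k))))^2)"

definition Ecal_le_1 :: "(nat \<Rightarrow> octo) \<Rightarrow> real \<Rightarrow> octo \<Rightarrow> bool" where
  "Ecal_le_1 a a0 x \<longleftrightarrow>
     summable (\<lambda>k. onorm (omult (opow x k) (a k)))
     \<and> summable (\<lambda>k. (onorm (omult (opow x (Suc k)) (a (Suc k))))^2)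
     \<and> Ecal a a0 x \<le> 1"

end

theory Submission
  imports Defs "HOL-Analysis.Analysis"
begin


lemma tail_bound:
  fixes d :: "nat \<Rightarrow> complex" and f :: "nat \<Rightarrow> real"
  assumes sf: "summable f" and le: "\<And>m. norm (d m) \<le> f m" and z: "\<And>m. m < n \<Longrightarrow> d m = 0"
  shows "summable d \<and> norm (suminf d) \<le> (\<Sum>i. f (i + n))"
proof -
  have sd: "summable (\<lambda>m. norm (d m))" using summable_comparison_test[of "\<lambda>m. norm (d m)" f] le sf by auto
  hence sd': "summable d" by (rule summable_norm_cancel)
  have "suminf d = (\<Sum>i. d (i + n)) + (\<Sum>i<n. d i)" using suminf_split_initial_segment[OF sd'] by simp
  also have "(\<Sum>i<n. d i) = 0" using z by simp
  finally have e: "suminf d = (\<Sum>i. d (i + n))" by simp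
  have s1: "summable (\<lambda>i. norm (d (i + n)))" using sd summable_iff_shift[of "\<lambda>m. norm (d m)" n] by simp
  have s2: "summable (\<lambda>i. f (i + n))" using sf summable_iff_shift[of f n] by simp
  have "norm (\<Sum>i. d (i + n)) \<le> (\<Sum>i. norm (d (i + n)))" by (rule summable_norm[OF s1])
  also have "\<dots> \<le> (\<Sum>i. f (i + n))" by (rule suminf_le[OF _ s1 s2]) (simp add: le)
  finally show ?thesis using e sd' by simp
qed

lemma tail_lim:
  fixes f :: "nat \<Rightarrow> real"
  assumes sf: "summable f"
  shows "(\<lambda>n. \<Sum>i. f (i + n)) \<longlonglongrightarrow> 0"
proof -
  have e: "(\<lambda>n. \<Sum>i. f (i + n)) = (\<lambda>n. suminf f - (\<Sum>i<n. f i))"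
    using suminf_split_initial_segment[OF sf] by (auto simp: algebra_simps)
  have "(\<lambda>n. suminf f - (\<Sum>i<n. f i)) \<longlonglongrightarrow> suminf f - suminf f"
    by (intro tendsto_intros summable_LIMSEQ sf)
  thus ?thesis unfolding e by simp
qed

lemma rootsum:
  assumes N: "N \<ge> 1"
  shows "(\<Sum>j<N. cis (2*pi/N) ^ (j*m)) = (if N dvd m then of_nat N else 0)"
proof -
  define z where "z = cis (2*pi/N) ^ m"
  have cN: "cis (2*pi/N) ^ N = 1" using N by (simp add: Complex.DeMoivre)
  have zN: "z ^ N = 1" unfolding z_def
    by (metis cN power_mult mult.commute power_one)
  have e: "(\<Sum>j<N. cis (2*pi/N) ^ (j*m)) = (\<Sum>j<N. z ^ j)" unfolding z_def
    by (intro sum.cong refl) (simp add: power_mult[symmetric] mult.commute)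
  have z1: "z = 1 \<longleftrightarrow> N dvd m"
  proof -
    have "z = exp(2 * of_real pi * \<i> * of_nat m / of_nat N)" unfolding z_def
      by (simp add: cis_conv_exp DeMoivre[symmetric] exp_of_nat_mult[symmetric] algebra_simps) 
    thus ?thesis using complex_root_unity_eq_1[OF N, of m] by simp
  qed
  show ?thesis
  proof (cases "N dvd m")
    case True thus ?thesis using z1 e by simp
  next
    case False
    hence "z \<noteq> 1" using z1 by simp
    hence "(\<Sum>j<N. z ^ j) = (z^N - 1) / (z - 1)" by (simp add: geometric_sum)
    thus ?thesis using e zN False by simp
  qed
qed

lemma dvd_small: fixes N x :: nat assumes "N dvd x" "x < 2*N" shows "x = 0 \<or> x = N"
proof -
  obtain q where q: "x = N * q" using assms(1) by (auto simp: dvd_def)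
  hence "q < 2" using assms(2) by (cases "N = 0") auto
  hence "q = 0 \<or> q = 1" by auto
  thus ?thesis using q by auto
qed

lemma cnj_unit: fixes u v :: complex assumes "cmod u = 1" "u * v = 1" shows "cnj u = v"
proof -
  have "u * cnj u = 1" using assms(1) complex_norm_square[of u] by (simp add: mult.commute)
  hence "cnj u = cnj u * (u * v)" using assms(2) by simp
  also have "\<dots> = v" using \<open>u * cnj u = 1\<close> by (simp add: mult.assoc[symmetric] mult.commute)
  finally show ?thesis .
qed

lemma Re_Re: fixes a b :: complex shows "Re a * Re b = (Re (a*b) + Re (a * cnj b)) / 2"
  by (simp add: algebra_simps)

lemma per_abs: fixes u v g e :: complex assumes "cnj u = v"
  shows "(1 - Re g) * (1 + Re (e * u)) = 1 - Re (g * 1) + Re (e * u) - Re (e * (g * u)) / 2 - Re (cnj e * (g * v)) / 2"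
  using assms[symmetric] by (simp add: field_simps)

lemma carath_rho:
  fixes c :: "nat \<Rightarrow> complex" and k :: nat and \<rho> :: real
  assumes summ: "\<And>w. cmod w < 1 \<Longrightarrow> summable (\<lambda>m. c m * w^m)"
    and re: "\<And>w. cmod w < 1 \<Longrightarrow> Re (\<Sum>m. c m * w^m) \<le> 1"
    and k: "k \<ge> 1" and rho: "0 < \<rho>" "\<rho> < 1"
  shows "\<rho>^k * cmod (c k) \<le> 2 * (1 - Re (c 0))"
proof -
  define f where "f m = cmod (c m) * \<rho>^m" for m
  have "summable (\<lambda>n. norm (c n * (of_real \<rho>) ^ n))"
  proof (rule powser_insidea[of c "of_real ((1+\<rho>)/2)"])
    have n: "cmod (of_real ((1+\<rho>)/2)) = (1+\<rho>)/2" using rho by (simp only: norm_of_real) simp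
    show "summable (\<lambda>n. c n * complex_of_real ((1 + \<rho>) / 2) ^ n)" by (rule summ) (use n rho in simp)
    show "cmod (complex_of_real \<rho>) < cmod (complex_of_real ((1 + \<rho>) / 2))" using n rho by simp
  qed
  hence sf: "summable f" unfolding f_def using rho by (simp add: norm_mult norm_power)
  have fnn: "0 \<le> f m" for m unfolding f_def using rho by simp
  define T where "T n = (\<Sum>i. f (i + n))" for n
  define \<eta> where "\<eta> = (if c k = 0 then 1 else sgn (c k))"
  have eta1: "cmod \<eta> = 1" unfolding \<eta>_def by (simp add: norm_sgn)
  have etac: "Re (cnj \<eta> * c k) = cmod (c k)"
  proof (cases "c k = 0")
    case False
    have "cnj \<eta> * c k = of_real (cmod (c k))"
    proof -
      have e1: "c k * cnj (c k) = of_real ((cmod (c k))^2)" by (rule complex_norm_square[symmetric])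
      have "cnj \<eta> * c k = (1 / cmod (c k)) *\<^sub>R (c k * cnj (c k))" unfolding \<eta>_def using False
        by (simp add: sgn_div_norm mult.commute divide_inverse)
      also have "\<dots> = of_real (cmod (c k))" unfolding e1 scaleR_conv_of_real using False
        by (simp add: power2_eq_square)
      finally show ?thesis .
    qed
    thus ?thesis by simp
  qed (simp add: \<eta>_def)
  have reeta: "\<bar>Re (e * X)\<bar> \<le> cmod X" if "cmod e = 1" for e X
    using abs_Re_le_cmod[of "e*X"] that by (simp add: norm_mult)
  define G where "G w = (\<Sum>m. c m * w^m)" for w
  have main: "\<rho>^k * cmod (c k) / 2 \<le> 1 - Re (c 0) + 2 * T (N - k)" if Nk: "N > k" for N
  proof -
    have N1: "N \<ge> 1" using Nk by simp
    define \<zeta> where "\<zeta> = cis (2*pi/N)"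
    have rs: "(\<Sum>j<N. \<zeta> ^ (j*m)) = (if N dvd m then of_nat N else 0)" for m
      unfolding \<zeta>_def by (rule rootsum[OF N1])
    have nz: "cmod (\<zeta>^j) = 1" for j unfolding \<zeta>_def by (simp add: norm_power)
    define z where "z j = of_real \<rho> * \<zeta>^j" for j
    have zn: "cmod (z j) < 1" for j unfolding z_def using rho nz by (simp add: norm_mult)
    have zpow: "z j ^ m = of_real (\<rho>^m) * \<zeta>^(j*m)" for j m
      unfolding z_def by (simp add: power_mult_distrib power_mult[symmetric] mult.commute)
    define Sp where "Sp p = (\<Sum>m. (if N dvd (m+p) then c m * of_real (\<rho>^m) else 0))" for p
    have avg: "(\<Sum>j<N. G (z j) * \<zeta>^(j*p)) = of_nat N * Sp p" for p
    proof -
      have "(\<Sum>j<N. G (z j) * \<zeta>^(j*p)) = (\<Sum>j<N. \<Sum>m. c m * of_real (\<rho>^m) * \<zeta>^(j*(m+p)))"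
      proof (rule sum.cong[OF refl])
        fix j
        have "G (z j) * \<zeta>^(j*p) = (\<Sum>m. c m * z j ^ m * \<zeta>^(j*p))"
          unfolding G_def by (rule suminf_mult2[OF summ[OF zn]])
        also have "\<dots> = (\<Sum>m. c m * of_real (\<rho>^m) * \<zeta>^(j*(m+p)))"
          by (simp add: zpow power_add algebra_simps)
        finally show "G (z j) * \<zeta>^(j*p) = (\<Sum>m. c m * of_real (\<rho>^m) * \<zeta>^(j*(m+p)))" .
      qed
      also have "\<dots> = (\<Sum>m. \<Sum>j<N. c m * of_real (\<rho>^m) * \<zeta>^(j*(m+p)))"
      proof (rule suminf_sum[symmetric])
        fix j
        have "summable (\<lambda>m. c m * z j ^ m * \<zeta>^(j*p))" by (rule summable_mult2[OF summ[OF zn]])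
        thus "summable (\<lambda>m. c m * of_real (\<rho>^m) * \<zeta>^(j*(m+p)))"
          by (simp add: zpow power_add algebra_simps)
      qed
      also have "\<dots> = (\<Sum>m. of_nat N * (if N dvd (m+p) then c m * of_real (\<rho>^m) else 0))"
        by (intro suminf_cong) (simp add: sum_distrib_left[symmetric] rs mult.commute)
      also have "\<dots> = of_nat N * Sp p" unfolding Sp_def
      proof (rule suminf_mult)
        show "summable (\<lambda>m. if N dvd (m+p) then c m * of_real (\<rho>^m) else 0)"
          using tail_bound[OF sf, of "\<lambda>m. if N dvd (m+p) then c m * of_real (\<rho>^m) else 0" 0]
          using rho by (simp add: f_def norm_mult norm_power)
      qed
      finally show ?thesis .
    qed
    define X where "X m = c m * of_real (\<rho>^m)" for m
    have nX: "norm (X m) = f m" for m unfolding X_def f_def using rho by (simp add: norm_mult norm_power)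
    have SpX: "Sp p = (\<Sum>m. if N dvd (m+p) then X m else 0)" for p unfolding Sp_def X_def by simp
    define D0 where "D0 = (\<Sum>m. if N dvd m \<and> m \<noteq> 0 then X m else 0)"
    have D0b: "summable (\<lambda>m. if N dvd m \<and> m \<noteq> 0 then X m else 0) \<and> cmod D0 \<le> T (N-k)"
      unfolding D0_def T_def by (rule tail_bound[OF sf]) (auto simp: nX fnn dest: dvd_imp_le)
    have S0: "Sp 0 = c 0 + D0"
    proof -
      have e: "(\<lambda>m. if N dvd (m+0) then X m else 0) = (\<lambda>m. (if m = 0 then X m else 0) + (if N dvd m \<and> m \<noteq> 0 then X m else 0))"
        by auto
      have "Sp 0 = (\<Sum>m. (if m = 0 then X m else 0) + (if N dvd m \<and> m \<noteq> 0 then X m else 0))"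
        unfolding SpX e ..
      also have "\<dots> = (\<Sum>m. (if m = 0 then X m else 0)) + D0" unfolding D0_def
        by (rule suminf_add[symmetric]) (use sums_summable[OF sums_single] D0b in auto)
      also have "(\<Sum>m. (if m = 0 then X m else 0)) = X 0" by (rule sums_unique[symmetric, OF sums_single])
      finally show ?thesis by (simp add: X_def)
    qed
    have S1b: "cmod (Sp k) \<le> T (N-k)"
    proof -
      have "summable (\<lambda>m. if N dvd (m+k) then X m else 0) \<and> cmod (\<Sum>m. if N dvd (m+k) then X m else 0) \<le> (\<Sum>i. f (i + (N-k)))"
      proof (rule tail_bound[OF sf])
        fix m assume "m < N - k"
        hence "\<not> N dvd (m+k)" using k by (auto dest: dvd_imp_le)
        thus "(if N dvd (m+k) then X m else 0) = 0" by simp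
      qed (simp add: nX fnn)
      thus ?thesis unfolding SpX T_def by simp
    qed
    define D2 where "D2 = (\<Sum>m. if N dvd (m + (N-k)) \<and> m \<noteq> k then X m else 0)"
    have D2b: "summable (\<lambda>m. if N dvd (m + (N-k)) \<and> m \<noteq> k then X m else 0) \<and> cmod D2 \<le> T (N-k)"
      unfolding D2_def T_def
    proof (rule tail_bound[OF sf])
      fix m assume m: "m < N - k"
      show "(if N dvd (m + (N-k)) \<and> m \<noteq> k then X m else 0) = 0"
      proof (cases "N dvd (m + (N-k)) \<and> m \<noteq> k")
        case True
        hence "m + (N-k) = 0 \<or> m + (N-k) = N" using dvd_small[of N "m + (N-k)"] m by auto
        thus ?thesis using True Nk by auto
      qed auto
    qed (simp add: nX fnn)
    have S2: "Sp (N-k) = X k + D2"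
    proof -
      have e: "(\<lambda>m. if N dvd (m+(N-k)) then X m else 0) = (\<lambda>m. (if m = k then X m else 0) + (if N dvd (m + (N-k)) \<and> m \<noteq> k then X m else 0))"
        using Nk by auto
      have "Sp (N-k) = (\<Sum>m. (if m = k then X m else 0) + (if N dvd (m + (N-k)) \<and> m \<noteq> k then X m else 0))"
        unfolding SpX e ..
      also have "\<dots> = (\<Sum>m. (if m = k then X m else 0)) + D2" unfolding D2_def
        by (rule suminf_add[symmetric]) (use sums_summable[OF sums_single] D2b in auto)
      also have "(\<Sum>m. (if m = k then X m else 0)) = X k" by (rule sums_unique[symmetric, OF sums_single])
      finally show ?thesis .
    qed
    have cN: "\<zeta> ^ N = 1" unfolding \<zeta>_def using N1 by (simp add: Complex.DeMoivre)
    have cj: "cnj (\<zeta>^(j*k)) = \<zeta>^(j*(N-k))" for j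
    proof (rule cnj_unit[OF nz])
      have "j*k + j*(N-k) = N * j" using Nk by (simp add: add_mult_distrib2[symmetric] mult.commute)
      hence "\<zeta>^(j*k) * \<zeta>^(j*(N-k)) = \<zeta>^(N*j)" by (simp only: power_add[symmetric])
      also have "\<dots> = 1" by (simp only: power_mult cN power_one)
      finally show "\<zeta>^(j*k) * \<zeta>^(j*(N-k)) = 1" .
    qed
    define p1 where "p1 X = Re (\<eta> * X)" for X
    define p2 where "p2 X = Re (cnj \<eta> * X)" for X
    have L1: "p1 (sum g A) = (\<Sum>x\<in>A. p1 (g x))" for g and A :: "nat set"
      unfolding p1_def by (simp add: sum_distrib_left)
    have L2: "p2 (sum g A) = (\<Sum>x\<in>A. p2 (g x))" for g and A :: "nat set"
      unfolding p2_def by (simp add: sum_distrib_left)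
    have L1N: "p1 (of_nat N * X) = real N * p1 X" for X unfolding p1_def by (simp add: algebra_simps)
    have L2N: "p2 (of_nat N * X) = real N * p2 X" for X unfolding p2_def by (simp add: algebra_simps)
    have p1z: "p1 0 = 0" unfolding p1_def by simp
    have L2a: "p2 (X1 + X2) = p2 X1 + p2 X2" for X1 X2 unfolding p2_def by (simp add: distrib_left)
    have per: "(1 - Re (G (z j))) * (1 + p1 (\<zeta>^(j*k))) = 1 - Re (G (z j) * \<zeta>^(j*0)) + p1 (\<zeta>^(j*k))
       - p1 (G (z j) * \<zeta>^(j*k)) / 2 - p2 (G (z j) * \<zeta>^(j*(N-k))) / 2" for j
      using per_abs[OF cj[of j], of "G (z j)" \<eta>] unfolding p1_def p2_def by simp
    have nn: "0 \<le> (\<Sum>j<N. (1 - Re (G (z j))) * (1 + p1 (\<zeta>^(j*k))))"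
    proof (rule sum_nonneg)
      fix j
      have "Re (G (z j)) \<le> 1" unfolding G_def by (rule re[OF zn])
      moreover have "\<bar>Re (\<eta> * \<zeta>^(j*k))\<bar> \<le> 1" using reeta[OF eta1, of "\<zeta>^(j*k)"] nz[of "j*k"] by simp
      ultimately show "0 \<le> (1 - Re (G (z j))) * (1 + p1 (\<zeta>^(j*k)))" unfolding p1_def by simp
    qed
    have sumid: "(\<Sum>j<N. (1 - Re (G (z j))) * (1 + p1 (\<zeta>^(j*k)))) =
       real N - Re (\<Sum>j<N. G (z j) * \<zeta>^(j*0)) + p1 (\<Sum>j<N. \<zeta>^(j*k))
       - p1 (\<Sum>j<N. G (z j) * \<zeta>^(j*k)) / 2 - p2 (\<Sum>j<N. G (z j) * \<zeta>^(j*(N-k))) / 2"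
      unfolding per L1 L2 by (simp add: sum.distrib sum_subtractf sum_divide_distrib)
    have nk: "\<not> N dvd k" using Nk k by (auto dest: dvd_imp_le)
    have "0 \<le> real N - Re (of_nat N * Sp 0) - p1 (of_nat N * Sp k) / 2 - p2 (of_nat N * Sp (N-k)) / 2"
      using nn unfolding sumid avg rs using nk p1z by simp
    hence "0 \<le> real N * (1 - Re (Sp 0) - p1 (Sp k) / 2 - p2 (Sp (N-k)) / 2)"
      unfolding L1N L2N by (simp add: algebra_simps)
    hence ineq: "0 \<le> 1 - Re (Sp 0) - p1 (Sp k) / 2 - p2 (Sp (N-k)) / 2"
      using N1 by (simp add: zero_le_mult_iff)
    have r1: "p2 (X k) = \<rho>^k * cmod (c k)" unfolding X_def p2_def using etac
      by (simp add: mult.assoc[symmetric])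
    have e2: "cmod (cnj \<eta>) = 1" using eta1 by simp
    have b1: "\<bar>p2 D2\<bar> \<le> cmod D2" unfolding p2_def by (rule reeta[OF e2])
    have b2: "\<bar>p1 (Sp k)\<bar> \<le> cmod (Sp k)" unfolding p1_def by (rule reeta[OF eta1])
    have b3: "\<bar>Re D0\<bar> \<le> cmod D0" by (rule abs_Re_le_cmod)
    have "0 \<le> 1 - (Re (c 0) + Re D0) - p1 (Sp k) / 2 - (\<rho>^k * cmod (c k) + p2 D2) / 2"
      using ineq unfolding S0 S2 L2a r1 by simp
    moreover have "- Re D0 \<le> T (N-k)" using b3 D0b[THEN conjunct2] by linarith
    moreover have "- p1 (Sp k) \<le> T (N-k)" using b2 S1b by linarith
    moreover have "- p2 D2 \<le> T (N-k)" using b1 D2b[THEN conjunct2] by linarith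
    ultimately show ?thesis by argo
  qed
  have lim: "(\<lambda>n. 1 - Re (c 0) + 2 * T n) \<longlonglongrightarrow> 1 - Re (c 0) + 2 * 0"
    unfolding T_def by (intro tendsto_intros tail_lim sf)
  have "\<rho>^k * cmod (c k) / 2 \<le> 1 - Re (c 0) + 2 * 0"
  proof (rule LIMSEQ_le_const[OF lim], intro exI allI impI)
    fix n :: nat assume "n \<ge> 1"
    thus "\<rho>^k * cmod (c k) / 2 \<le> 1 - Re (c 0) + 2 * T n" using main[of "n+k"] by simp
  qed
  thus ?thesis by simp
qed


lemma carath:
  fixes c :: "nat \<Rightarrow> complex" and k :: nat
  assumes summ: "\<And>w. cmod w < 1 \<Longrightarrow> summable (\<lambda>m. c m * w^m)"
    and re: "\<And>w. cmod w < 1 \<Longrightarrow> Re (\<Sum>m. c m * w^m) \<le> 1"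
    and k: "k \<ge> 1"
  shows "cmod (c k) \<le> 2 * (1 - Re (c 0))"
proof -
  have lim: "(\<lambda>n. (1 + - inverse (real (Suc n)))^k * cmod (c k)) \<longlonglongrightarrow> 1^k * cmod (c k)"
    by (intro tendsto_intros LIMSEQ_inverse_real_of_nat_add_minus)
  have "1^k * cmod (c k) \<le> 2 * (1 - Re (c 0))"
  proof (rule LIMSEQ_le_const2[OF lim], intro exI allI impI)
    fix n :: nat assume n: "n \<ge> 1"
    have i1: "inverse (real (Suc n)) \<le> 1/2" using n by (simp add: field_simps)
    have i2: "0 < inverse (real (Suc n))" by simp
    show "(1 + - inverse (real (Suc n)))^k * cmod (c k) \<le> 2 * (1 - Re (c 0))"
      by (rule carath_rho[OF summ re k]) (use i1 i2 in auto)
  qed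
  thus ?thesis by simp
qed



lemma oct_cases: obtains a0 a1 a2 a3 a4 a5 a6 a7 where "x = Oct (Q a0 a1 a2 a3) (Q a4 a5 a6 a7)"
  by (metis octo.exhaust quat.exhaust)

lemma sum8: "(\<Sum>i<(8::nat). g i) = g 0 + g 1 + g 2 + g 3 + g 4 + g 5 + g 6 + (g 7 :: real)"
  by (simp add: numeral_eq_Suc lessThan_Suc)

lemma nsq: "(\<Sum>i<8. (ocomp (omult x y) i)^2) = (\<Sum>i<8. (ocomp x i)^2) * (\<Sum>i<8. (ocomp y i)^2)"
proof -
  obtain a0 a1 a2 a3 a4 a5 a6 a7 where x: "x = Oct (Q a0 a1 a2 a3) (Q a4 a5 a6 a7)" by (rule oct_cases)
  obtain b0 b1 b2 b3 b4 b5 b6 b7 where y: "y = Oct (Q b0 b1 b2 b3) (Q b4 b5 b6 b7)" by (rule oct_cases)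
  show ?thesis unfolding x y sum8 by (simp add: power2_eq_square algebra_simps)
qed

lemma onorm_mult: "onorm (omult x y) = onorm x * onorm y"
  unfolding onorm_def nsq by (simp add: real_sqrt_mult)

lemma onorm_oone: "onorm oone = 1"
  unfolding onorm_def oone_def sum8 by simp

lemma onorm_opow: "onorm (opow x k) = onorm x ^ k"
  by (induction k) (simp_all add: onorm_oone onorm_mult)

lemma onorm_nonneg: "0 \<le> onorm x" unfolding onorm_def by (simp add: sum_nonneg)

lemma ocomp_mk: assumes "i < 8" shows "ocomp (mk_oct g) i = g i"
proof -
  have "i = 0 \<or> i = 1 \<or> i = 2 \<or> i = 3 \<or> i = 4 \<or> i = 5 \<or> i = 6 \<or> i = 7" using assms by auto
  thus ?thesis unfolding mk_oct_def by auto
qed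

lemma ore_mk: "ore (mk_oct g) = g 0" unfolding ore_def by (simp add: ocomp_mk)

definition uimag :: "octo \<Rightarrow> bool" where
  "uimag I \<longleftrightarrow> ocomp I 0 = 0 \<and> (\<Sum>i<8. (ocomp I i)^2) = 1"

definition oemb :: "octo \<Rightarrow> complex \<Rightarrow> octo" where
  "oemb I w = mk_oct (\<lambda>i. if i = 0 then Re w else Im w * ocomp I i)"

definition Lf :: "octo \<Rightarrow> octo \<Rightarrow> real" where
  "Lf I y = (\<Sum>i<8. ocomp I i * ocomp y i)"

lemma emb_mult:
  assumes "uimag I" shows "omult (oemb I w) (oemb I v) = oemb I (w * v)"
proof -
  obtain a0 a1 a2 a3 a4 a5 a6 a7 where x: "I = Oct (Q a0 a1 a2 a3) (Q a4 a5 a6 a7)" by (rule oct_cases)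
  have a0: "a0 = 0" using assms unfolding uimag_def x by simp
  have S: "a1^2 + a2^2 + a3^2 + a4^2 + a5^2 + a6^2 + a7^2 = 1"
    using assms a0 unfolding uimag_def x sum8 by simp
  have S': "a1*a1 = 1 - (a2*a2 + a3*a3 + a4*a4 + a5*a5 + a6*a6 + a7*a7)" using S by (simp add: power2_eq_square)
  have S2: "(a1^2 + a2^2 + a3^2 + a4^2 + a5^2 + a6^2 + a7^2) * (Im v * Im w) = Im v * Im w" using S by simp
  show ?thesis unfolding x oemb_def mk_oct_def using a0 S2
    by (simp add: algebra_simps power2_eq_square)
qed


lemma oone_emb: "oone = oemb I 1"
  unfolding oone_def oemb_def mk_oct_def by simp

lemma opow_emb: assumes "uimag I" shows "opow (oemb I w) k = oemb I (w^k)"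
  by (induction k) (simp_all add: oone_emb emb_mult[OF assms])

lemma ore_emb: "ore (oemb I w) = Re w"
  unfolding oemb_def by (simp add: ore_mk)

lemma onorm_emb: assumes "uimag I" shows "onorm (oemb I w) = cmod w"
proof -
  obtain a0 a1 a2 a3 a4 a5 a6 a7 where x: "I = Oct (Q a0 a1 a2 a3) (Q a4 a5 a6 a7)" by (rule oct_cases)
  have a0: "a0 = 0" using assms unfolding uimag_def x by simp
  have S: "a1^2 + a2^2 + a3^2 + a4^2 + a5^2 + a6^2 + a7^2 = 1"
    using assms a0 unfolding uimag_def x sum8 by simp
  have S2: "(a1^2 + a2^2 + a3^2 + a4^2 + a5^2 + a6^2 + a7^2) * (Im w)^2 = (Im w)^2" using S by simp
  have "(\<Sum>i<8. (ocomp (oemb I w) i)^2) = (Re w)^2 + (Im w)^2"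
    unfolding x oemb_def mk_oct_def sum8 using a0 S2 by (simp add: algebra_simps power_mult_distrib)
  thus ?thesis unfolding onorm_def cmod_def by simp
qed

lemma key:
  assumes "uimag I"
  shows "Complex (ore (omult (oemb I w) a)) (Lf I (omult (oemb I w) a)) = w * Complex (ore a) (Lf I a)"
proof -
  obtain a0 a1 a2 a3 a4 a5 a6 a7 where x: "I = Oct (Q a0 a1 a2 a3) (Q a4 a5 a6 a7)" by (rule oct_cases)
  obtain b0 b1 b2 b3 b4 b5 b6 b7 where y: "a = Oct (Q b0 b1 b2 b3) (Q b4 b5 b6 b7)" by (rule oct_cases)
  have a0: "a0 = 0" using assms unfolding uimag_def x by simp
  have S: "a1^2 + a2^2 + a3^2 + a4^2 + a5^2 + a6^2 + a7^2 = 1"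
    using assms a0 unfolding uimag_def x sum8 by simp
  have S2: "(a1^2 + a2^2 + a3^2 + a4^2 + a5^2 + a6^2 + a7^2) * (Im w * b0) = Im w * b0" using S by simp
  show ?thesis unfolding x y oemb_def mk_oct_def Lf_def sum8 ore_def complex_eq_iff using a0 S2
    by (simp add: algebra_simps power2_eq_square)
qed

lemma decomp: "\<exists>I w. uimag I \<and> x = oemb I w \<and> Re w = ore x \<and> Im w = Lf I x \<and> cmod w = onorm x"
proof -
  obtain a0 a1 a2 a3 a4 a5 a6 a7 where x: "x = Oct (Q a0 a1 a2 a3) (Q a4 a5 a6 a7)" by (rule oct_cases)
  define S where "S = a1^2 + a2^2 + a3^2 + a4^2 + a5^2 + a6^2 + a7^2"
  define s where "s = sqrt S"
  have S0: "S \<ge> 0" unfolding S_def by simp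
  have ss: "s * s = S" unfolding s_def using S0 by simp
  have on: "onorm x = sqrt (a0^2 + S)" unfolding onorm_def x sum8 S_def by (simp add: add.assoc)
  show ?thesis
  proof (cases "s = 0")
    case True
    hence "S = 0" using ss by simp
    hence z: "a1 = 0 \<and> a2 = 0 \<and> a3 = 0 \<and> a4 = 0 \<and> a5 = 0 \<and> a6 = 0 \<and> a7 = 0"
      unfolding S_def by (simp add: add_nonneg_eq_0_iff)
    define I where "I = Oct (Q 0 1 0 0) (Q 0 0 0 0)"
    show ?thesis
    proof (intro exI conjI)
      show "uimag I" unfolding uimag_def I_def sum8 by simp
      show "x = oemb I (Complex a0 0)" unfolding x I_def oemb_def mk_oct_def using z by simp
      show "Re (Complex a0 0) = ore x" unfolding x ore_def by simp
      show "Im (Complex a0 0) = Lf I x" unfolding x I_def Lf_def sum8 using z by simp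
      show "cmod (Complex a0 0) = onorm x" unfolding on \<open>S = 0\<close> by (simp add: cmod_def)
    qed
  next
    case False
    define I where "I = Oct (Q 0 (a1/s) (a2/s) (a3/s)) (Q (a4/s) (a5/s) (a6/s) (a7/s))"
    show ?thesis
    proof (intro exI conjI)
      have Sn: "S \<noteq> 0" using False ss by auto
      show "uimag I" unfolding uimag_def I_def sum8 using False ss Sn[unfolded S_def power2_eq_square]
        by (simp add: power_divide S_def add_divide_distrib[symmetric] power2_eq_square)
      show "x = oemb I (Complex a0 s)" unfolding x I_def oemb_def mk_oct_def using False by simp
      show "Re (Complex a0 s) = ore x" unfolding x ore_def by simp
      show "Im (Complex a0 s) = Lf I x" unfolding x I_def Lf_def sum8 using False ss
        by (simp add: S_def add_divide_distrib[symmetric] power2_eq_square field_simps)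
      show "cmod (Complex a0 s) = onorm x" unfolding on cmod_def using S0 s_def by simp
    qed
  qed
qed



lemma coeff_bound:
  assumes sr: "slice_regular_series a" and re: "\<forall>x. onorm x < 1 \<longrightarrow> ore (oseries a x) \<le> 1"
    and a0: "a 0 = oct_of_real a0" and k: "k \<ge> 1"
  shows "onorm (a k) \<le> 2 * (1 - a0)"
proof -
  obtain I w0 where I: "uimag I" and w0: "a k = oemb I w0" "Re w0 = ore (a k)" "Im w0 = Lf I (a k)"
    "cmod w0 = onorm (a k)" using decomp by blast
  define c where "c m = Complex (ore (a m)) (Lf I (a m))" for m
  have ck: "c k = w0" using w0 by (simp add: c_def complex_eq_iff)
  have trm: "c m * w^m = Complex (ore (omult (opow (oemb I w) m) (a m))) (Lf I (omult (opow (oemb I w) m) (a m)))" for m w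
    unfolding opow_emb[OF I] key[OF I] c_def by (simp add: mult.commute)
  have s: "\<forall>i<8. summable (\<lambda>m. ocomp (omult (opow (oemb I w) m) (a m)) i)" if "cmod w < 1" for w
  proof -
    have n: "onorm (oemb I w) < 1" using that onorm_emb[OF I] by simp
    thus ?thesis using sr unfolding slice_regular_series_def by blast
  qed
  have summ: "summable (\<lambda>m. c m * w^m)" if w: "cmod w < 1" for w
    unfolding trm summable_complex_iff
  proof
    show "summable (\<lambda>m. Re (Complex (ore (omult (opow (oemb I w) m) (a m))) (Lf I (omult (opow (oemb I w) m) (a m)))))"
      using s[OF w] unfolding ore_def by simp
    show "summable (\<lambda>m. Im (Complex (ore (omult (opow (oemb I w) m) (a m))) (Lf I (omult (opow (oemb I w) m) (a m)))))"
      unfolding Lf_def complex.sel using s[OF w] by (intro summable_sum summable_mult) auto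
  qed
  have rew: "Re (\<Sum>m. c m * w^m) \<le> 1" if w: "cmod w < 1" for w
  proof -
    have "Re (\<Sum>m. c m * w^m) = (\<Sum>m. Re (c m * w^m))" by (rule Re_suminf[OF summ[OF w]])
    also have "\<dots> = (\<Sum>m. ocomp (omult (opow (oemb I w) m) (a m)) 0)" unfolding trm by (simp add: ore_def)
    also have "\<dots> = ore (oseries a (oemb I w))" unfolding oseries_def ore_mk ..
    also have "\<dots> \<le> 1" using re onorm_emb[OF I, of w] w by simp
    finally show ?thesis .
  qed
  have "cmod (c k) \<le> 2 * (1 - Re (c 0))" by (rule carath[OF summ rew k])
  moreover have "Re (c 0) = a0" unfolding c_def a0 by (simp add: ore_def oct_of_real_def)
  ultimately show ?thesis using ck w0 by simp
qed

lemma real_ineq: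
  fixes R r a0 :: real
  assumes R: "0 < R" "R < 1" "3*R^3 - 5*R^2 - 3*R + 1 = 0" and a0: "0 \<le> a0" "a0 < 1" and r: "0 \<le> r" "r \<le> R"
  shows "a0 + 2*(1-a0) * (r/(1-r)) + (1/(1+a0) + r/(1-r)) * ((2*(1-a0))^2 * (r^2/(1-r^2))) \<le> 1"
proof -
  define P where "P = R/(1-R)"
  define Q where "Q = R^2/(1-R^2)"
  define t where "t = 1 - a0"
  have t: "0 < t" "t \<le> 1" using a0 unfolding t_def by auto
  have R2: "R^2 < 1" using R by (simp add: power_less_one_iff abs_less_iff)
  have P0: "0 \<le> P" unfolding P_def using R by simp
  have Q0: "0 \<le> Q" unfolding Q_def using R2 by simp
  have hP: "r/(1-r) \<le> P" unfolding P_def by (rule frac_le) (use R r in auto)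
  have hQ: "r^2/(1-r^2) \<le> Q" unfolding Q_def
  proof (rule frac_le)
    show "r^2 \<le> R^2" using r by (simp add: power_mono)
    thus "1 - R^2 \<le> 1 - r^2" by simp
  qed (use R2 in auto)
  have rt: "0 \<le> r/(1-r)" using r R by simp
  have rq: "0 \<le> r^2/(1-r^2)" using r R hQ
    by (metis divide_nonneg_nonneg diff_ge_0_iff_ge le_less_trans less_imp_le power_le_one_iff r(1) R(2) zero_le_power2)
  have root: "2*P + 4*Q*(1+P) = 1"
  proof -
    have d1: "1 - R \<noteq> 0" "1 - R^2 \<noteq> 0" using R R2 by auto
    have e1: "P*(1-R) = R" unfolding P_def using d1 by simp
    have e2: "Q*(1-R^2) = R^2" unfolding Q_def using d1 by simp
    have e3: "(1+P)*(1-R) = 1" using e1 by (simp add: algebra_simps)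
    have "(2*P + 4*Q*(1+P) - 1) * ((1-R)*(1-R^2)) = 2*(P*(1-R))*(1-R^2) + 4*(Q*(1-R^2))*((1+P)*(1-R)) - (1-R)*(1-R^2)"
      by (simp add: algebra_simps)
    also have "\<dots> = 2*R*(1-R^2) + 4*R^2 - (1-R)*(1-R^2)" unfolding e1 e2 e3 by simp
    also have "\<dots> = -(3*R^3 - 5*R^2 - 3*R + 1)" by (simp add: algebra_simps power2_eq_square power3_eq_cube)
    finally have "(2*P + 4*Q*(1+P) - 1) * ((1-R)*(1-R^2)) = -(3*R^3 - 5*R^2 - 3*R + 1)" .
    thus ?thesis using R(3) d1 by simp
  qed
  have b1: "a0 + 2*(1-a0) * (r/(1-r)) + (1/(1+a0) + r/(1-r)) * ((2*(1-a0))^2 * (r^2/(1-r^2)))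
      \<le> a0 + 2*t*P + (1/(1+a0) + P) * (4*t^2*Q)"
  proof -
    have "2*(1-a0) * (r/(1-r)) \<le> 2*(1-a0)*P" using hP a0 by (intro mult_left_mono) auto
    hence "2*(1-a0) * (r/(1-r)) \<le> 2*t*P" unfolding t_def .
    moreover have "(1/(1+a0) + r/(1-r)) * ((2*(1-a0))^2 * (r^2/(1-r^2))) \<le> (1/(1+a0) + P) * (4*t^2*Q)"
    proof (rule mult_mono)
      show "1/(1+a0) + r/(1-r) \<le> 1/(1+a0) + P" using hP by simp
      have e: "(2*(1-a0))^2 = 4*t^2" unfolding t_def by (simp add: power2_eq_square algebra_simps)
      show "(2*(1-a0))^2 * (r^2/(1-r^2)) \<le> 4*t^2*Q" unfolding e using hQ by (intro mult_left_mono) auto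
      show "0 \<le> 1/(1+a0) + P" using a0 P0 by simp
      show "0 \<le> (2*(1-a0))^2 * (r^2/(1-r^2))" using rq by (intro mult_nonneg_nonneg) auto
    qed
    ultimately show ?thesis by simp
  qed
  have h: "t*(1/(1+a0) + P) \<le> 1 + P"
  proof -
    have "t/(1+a0) \<le> 1" unfolding t_def using a0 by simp
    moreover have "t*P \<le> P" using t P0 by (simp add: mult_left_le_one_le)
    ultimately show ?thesis by (simp add: algebra_simps)
  qed
  have "4*t*Q * (t*(1/(1+a0) + P)) \<le> 4*t*Q*(1+P)" by (rule mult_left_mono[OF h]) (use t Q0 in simp)
  hence "a0 + 2*t*P + (1/(1+a0) + P) * (4*t^2*Q) \<le> a0 + t*(2*P + 4*Q*(1+P))"
    by (simp add: algebra_simps power2_eq_square)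
  also have "\<dots> = 1" unfolding root t_def by simp
  finally show ?thesis using b1 by simp
qed


lemma onorm_oreal: "onorm (oct_of_real c) = \<bar>c\<bar>"
  unfolding onorm_def oct_of_real_def sum8 by simp

lemma part1:
  fixes R :: real
  assumes R: "0 < R" "R < 1" "3*R^3 - 5*R^2 - 3*R + 1 = 0"
    and sr: "slice_regular_series a" and re: "\<forall>x. onorm x < 1 \<longrightarrow> ore (oseries a x) \<le> 1"
    and a0: "a 0 = oct_of_real a0" "0 \<le> a0" "a0 < 1"
    and x: "onorm x < 1" "onorm x \<le> R"
  shows "Ecal_le_1 a a0 x"
proof -
  define r where "r = onorm x"
  define B where "B = 2*(1-a0)"
  have r: "0 \<le> r" "r < 1" "r \<le> R" using x onorm_nonneg unfolding r_def by auto
  have B0: "0 \<le> B" unfolding B_def using a0 by simp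
  define t where "t k = onorm (omult (opow x k) (a k))" for k
  have tk: "t k = r^k * onorm (a k)" for k unfolding t_def r_def by (simp add: onorm_mult onorm_opow)
  have t0: "0 \<le> t k" for k unfolding t_def by (rule onorm_nonneg)
  have ak: "onorm (a k) \<le> B" if "k \<ge> 1" for k unfolding B_def by (rule coeff_bound[OF sr re a0(1) that])
  define u where "u k = (if k = 0 then a0 else B * r^k)" for k
  have tu: "t k \<le> u k" for k
  proof (cases "k = 0")
    case True thus ?thesis unfolding tk u_def using a0 by (simp add: onorm_oreal)
  next
    case False thus ?thesis unfolding tk u_def using ak[of k] r
      by (simp add: mult.commute mult_right_mono)
  qed
  have us: "u sums (B/(1-r) + (a0 - B))"
  proof -
    have "(\<lambda>k. B * r^k) sums (B * (1/(1-r)))" by (rule sums_mult[OF geometric_sums]) (use r in simp)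
    moreover have "(\<lambda>k. if k = 0 then a0 - B else 0) sums (a0 - B)" using sums_single[of 0 "\<lambda>_. a0 - B"] by simp
    ultimately have "(\<lambda>k. B * r^k + (if k = 0 then a0 - B else 0)) sums (B * (1/(1-r)) + (a0 - B))" by (rule sums_add)
    moreover have "(\<lambda>k. B * r^k + (if k = 0 then a0 - B else 0)) = u" unfolding u_def by auto
    ultimately show ?thesis by simp
  qed
  have st: "summable t" by (rule summable_comparison_test[of _ u]) (use tu t0 sums_summable[OF us] in auto)
  have tle: "suminf t \<le> a0 + B * (r/(1-r))"
  proof -
    have "suminf t \<le> suminf u" by (rule suminf_le[OF tu st sums_summable[OF us]])
    also have "suminf u = B/(1-r) + (a0 - B)" by (rule sums_unique[OF us, symmetric])
    also have "\<dots> = a0 + B * (r/(1-r))" using r by (simp add: field_simps)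
    finally show ?thesis .
  qed
  define v where "v k = B^2 * r^2 * (r^2)^k" for k
  have r2: "r^2 < 1" using r by (simp add: power_less_one_iff abs_less_iff)
  have vs: "v sums (B^2 * r^2 * (1/(1-r^2)))" unfolding v_def
    by (rule sums_mult[OF geometric_sums]) (use r2 r in simp)
  have sv: "(t (Suc k))^2 \<le> v k" for k
  proof -
    have "t (Suc k) \<le> r^(Suc k) * B" unfolding tk using ak[of "Suc k"] r by (simp add: mult_left_mono)
    hence "(t (Suc k))^2 \<le> (r^(Suc k) * B)^2" using t0 by (intro power_mono) auto
    also have "\<dots> = v k" unfolding v_def by (simp add: power_mult_distrib power_mult[symmetric] algebra_simps power2_eq_square)
    finally show ?thesis .
  qed
  have ss: "summable (\<lambda>k. (t (Suc k))^2)" by (rule summable_comparison_test[of _ v]) (use sv sums_summable[OF vs] in auto)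
  have sle: "(\<Sum>k. (t (Suc k))^2) \<le> B^2 * (r^2/(1-r^2))"
  proof -
    have "(\<Sum>k. (t (Suc k))^2) \<le> suminf v" by (rule suminf_le[OF sv ss sums_summable[OF vs]])
    also have "suminf v = B^2 * r^2 * (1/(1-r^2))" by (rule sums_unique[OF vs, symmetric])
    finally show ?thesis by simp
  qed
  have coef: "0 \<le> 1/(1+a0) + r/(1-r)" using a0 r by simp
  have "Ecal a a0 x = suminf t + (1/(1+a0) + r/(1-r)) * (\<Sum>k. (t (Suc k))^2)"
    unfolding Ecal_def t_def r_def ..
  also have "\<dots> \<le> (a0 + B * (r/(1-r))) + (1/(1+a0) + r/(1-r)) * (B^2 * (r^2/(1-r^2)))"
    using tle mult_left_mono[OF sle coef] by linarith
  also have "\<dots> \<le> 1" unfolding B_def using real_ineq[OF R a0(2,3) r(1,3)] by simp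
  finally have "Ecal a a0 x \<le> 1" .
  thus ?thesis unfolding Ecal_le_1_def using st ss unfolding t_def by simp
qed


lemma omult_oreal: "ocomp (omult y (oct_of_real c)) i = c * ocomp y i"
proof -
  obtain a0 a1 a2 a3 a4 a5 a6 a7 where y: "y = Oct (Q a0 a1 a2 a3) (Q a4 a5 a6 a7)" by (rule oct_cases)
  show ?thesis unfolding y oct_of_real_def by simp
qed

lemma oreal_mult: "omult (oct_of_real a) (oct_of_real b) = oct_of_real (a*b)"
  unfolding oct_of_real_def by simp

lemma opow_oreal: "opow (oct_of_real r) k = oct_of_real (r^k)"
  by (induction k) (simp_all add: oreal_mult oone_def oct_of_real_def)

lemma ocomp_le: "\<bar>ocomp y i\<bar> \<le> onorm y"
proof -
  obtain a0 a1 a2 a3 a4 a5 a6 a7 where y: "y = Oct (Q a0 a1 a2 a3) (Q a4 a5 a6 a7)" by (rule oct_cases)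
  have "(ocomp y i)^2 \<le> (\<Sum>j<8. (ocomp y j)^2)"
    unfolding y sum8
    using zero_le_power2[of a0] zero_le_power2[of a1] zero_le_power2[of a2] zero_le_power2[of a3]
      zero_le_power2[of a4] zero_le_power2[of a5] zero_le_power2[of a6] zero_le_power2[of a7]
    by (simp split: if_split) linarith?
  hence "sqrt ((ocomp y i)^2) \<le> onorm y" unfolding onorm_def by (rule real_sqrt_le_mono)
  thus ?thesis by simp
qed

lemma re_geom: fixes w :: complex assumes "cmod w < 1" shows "1/2 \<le> Re (1/(1-w))"
proof -
  define u where "u = Re w"
  define v where "v = Im w"
  have uv: "u^2 + v^2 < 1" using assms unfolding u_def v_def cmod_def by (simp add: real_sqrt_lt_1_iff)
  have u1: "u < 1"
  proof (rule ccontr)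
    assume "\<not> u < 1" hence "1 \<le> u^2" by (simp add: one_le_power)
    thus False using uv zero_le_power2[of v] by linarith
  qed
  have D: "0 < (1-u)^2 + v^2" using u1 by (simp add: add_pos_nonneg)
  have e: "Re (1/(1-w)) = (1-u) / ((1-u)^2 + v^2)" unfolding Re_divide u_def v_def by simp
  have "((1-u)^2 + v^2) * (1/2) \<le> 1 - u" using uv by (simp add: power2_eq_square algebra_simps)
  thus ?thesis unfolding e using D by (simp add: pos_le_divide_eq mult.commute)
qed

lemma cubic_neg:
  fixes R r :: real
  assumes R: "0 < R" "R < 1" "3*R^3 - 5*R^2 - 3*R + 1 = 0" and r: "R < r" "r < 1"
  shows "3*r^3 - 5*r^2 - 3*r + 1 < 0"
proof -
  have e: "3*r^3 - 5*r^2 - 3*r + 1 = (r - R) * (3*(r^2 + r*R + R^2) - 5*(r+R) - 3)"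
    using R(3) by (simp add: algebra_simps power2_eq_square power3_eq_cube) (simp add: algebra_simps power2_eq_square power3_eq_cube)?
  have h: "r^2 < r" "r*R < r" "R^2 < R" using R r by (simp_all add: power2_eq_square)
  have "3*(r^2 + r*R + R^2) - 5*(r+R) - 3 = 3*r^2 + 3*(r*R) + 3*R^2 - 5*r - 5*R - 3" by (simp add: algebra_simps)
  also have "\<dots> < 0" using h r R(1) by linarith
  finally have "3*(r^2 + r*R + R^2) - 5*(r+R) - 3 < 0" .
  moreover have "0 < r - R" using r by simp
  ultimately show ?thesis unfolding e by (simp add: mult_pos_neg)
qed


lemma part2:
  fixes R r :: real
  assumes R: "0 < R" "R < 1" "3*R^3 - 5*R^2 - 3*R + 1 = 0" and r: "R < r" "r < 1"
  shows "\<exists>(a :: nat \<Rightarrow> octo) (a0 :: real).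
           slice_regular_series a
           \<and> (\<forall>x. onorm x < 1 \<longrightarrow> ore (oseries a x) \<le> 1)
           \<and> a 0 = oct_of_real a0 \<and> 0 \<le> a0 \<and> a0 < 1
           \<and> (\<exists>x. onorm x = r \<and> \<not> Ecal_le_1 a a0 x)"
proof -
  define d :: "nat \<Rightarrow> real" where "d k = (if k = 0 then 0 else -2)" for k
  define a where "a k = oct_of_real (d k)" for k
  have dabs: "\<bar>d k\<bar> \<le> 2" for k unfolding d_def by simp
  have sr: "slice_regular_series a" unfolding slice_regular_series_def
  proof (intro allI impI)
    fix x :: octo and i :: nat assume x: "onorm x < 1" and i: "i < 8"
    show "summable (\<lambda>k. ocomp (omult (opow x k) (a k)) i)"
    proof (rule summable_comparison_test)
      show "summable (\<lambda>k. 2 * onorm x ^ k)" using x onorm_nonneg[of x]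
        by (intro summable_mult summable_geometric) simp
      show "\<exists>N. \<forall>n\<ge>N. norm (ocomp (omult (opow x n) (a n)) i) \<le> 2 * onorm x ^ n"
      proof (intro exI allI impI)
        fix n :: nat
        have "\<bar>d n * ocomp (opow x n) i\<bar> \<le> 2 * onorm x ^ n"
          unfolding abs_mult using dabs[of n] ocomp_le[of "opow x n" i] onorm_opow[of x n]
          by (simp add: mult_mono)
        thus "norm (ocomp (omult (opow x n) (a n)) i) \<le> 2 * onorm x ^ n"
          unfolding a_def omult_oreal by (simp add: mult.commute)
      qed
    qed
  qed
  have re: "\<forall>x. onorm x < 1 \<longrightarrow> ore (oseries a x) \<le> 1"
  proof (intro allI impI)
    fix x :: octo assume x: "onorm x < 1"
    obtain I w where I: "uimag I" and xw: "x = oemb I w" and cw: "cmod w = onorm x"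
      using decomp[of x] by blast
    have w: "cmod w < 1" using x cw by simp
    have e: "ore (oseries a x) = (\<Sum>k. Re (of_real (d k) * w^k))"
      unfolding oseries_def ore_mk a_def omult_oreal xw opow_emb[OF I]
      by (simp add: ore_emb[unfolded ore_def])
    have "(\<lambda>k. -2 * w^k) sums (-2 * (1/(1-w)))" by (rule sums_mult[OF geometric_sums[OF w]])
    moreover have "(\<lambda>k. if k = 0 then 2 else (0::complex)) sums 2" using sums_single[of 0 "\<lambda>_. 2::complex"] by simp
    ultimately have "(\<lambda>k. -2 * w^k + (if k = 0 then 2 else 0)) sums (-2 * (1/(1-w)) + 2)" by (rule sums_add)
    moreover have "(\<lambda>k. -2 * w^k + (if k = 0 then 2 else 0)) = (\<lambda>k. of_real (d k) * w^k)"
      unfolding d_def by auto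
    ultimately have "(\<lambda>k. of_real (d k) * w^k) sums (-2 * (1/(1-w)) + 2)" by simp
    hence "(\<lambda>k. Re (of_real (d k) * w^k)) sums Re (-2 * (1/(1-w)) + 2)" by (rule sums_Re)
    hence "ore (oseries a x) = Re (-2 * (1/(1-w)) + 2)" unfolding e by (rule sums_unique[symmetric])
    also have "\<dots> = 2 - 2 * Re (1/(1-w))"
    proof -
      define z where "z = 1/(1-w)"
      show ?thesis unfolding z_def[symmetric] by simp
    qed
    also have "\<dots> \<le> 1" using re_geom[OF w] by simp
    finally show "ore (oseries a x) \<le> 1" .
  qed
  have r0: "0 < r" using R r by simp
  define x where "x = oct_of_real r"
  have xn: "onorm x = r" unfolding x_def onorm_oreal using r0 by simp
  define t where "t k = onorm (omult (opow x k) (a k))" for k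
  have tk: "t k = (if k = 0 then 0 else 2 * r^k)" for k
    unfolding t_def x_def a_def opow_oreal oreal_mult onorm_oreal d_def using r0 by (simp add: abs_mult)
  have ts: "t sums (2 * (1/(1-r)) + -2)"
  proof -
    have "(\<lambda>k. 2 * r^k) sums (2 * (1/(1-r)))" by (rule sums_mult[OF geometric_sums]) (use r0 r in simp)
    moreover have "(\<lambda>k. if k = 0 then -2 else (0::real)) sums (-2)" using sums_single[of 0 "\<lambda>_. -2::real"] by simp
    ultimately have "(\<lambda>k. 2 * r^k + (if k = 0 then -2 else 0)) sums (2 * (1/(1-r)) + -2)" by (rule sums_add)
    moreover have "(\<lambda>k. 2 * r^k + (if k = 0 then -2 else 0)) = t" using tk by auto
    ultimately show ?thesis by simp
  qed
  have r2: "r^2 < 1" using r r0 by (simp add: power_less_one_iff abs_less_iff)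
  have t2: "(\<lambda>k. (t (Suc k))^2) sums (4 * r^2 * (1/(1-r^2)))"
  proof -
    have "(\<lambda>k. 4 * r^2 * (r^2)^k) sums (4 * r^2 * (1/(1-r^2)))" by (rule sums_mult[OF geometric_sums]) (use r2 in simp)
    moreover have "(\<lambda>k. 4 * r^2 * (r^2)^k) = (\<lambda>k. (t (Suc k))^2)"
      unfolding tk by (auto simp: power_mult_distrib power_mult[symmetric] algebra_simps power2_eq_square)
    ultimately show ?thesis by simp
  qed
  have notle: "\<not> Ecal_le_1 a 0 x"
  proof
    assume "Ecal_le_1 a 0 x"
    hence E: "Ecal a 0 x \<le> 1" unfolding Ecal_le_1_def by simp
    have "Ecal a 0 x = (2 * (1/(1-r)) + -2) + (1/(1+0) + r/(1-r)) * (4 * r^2 * (1/(1-r^2)))"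
      unfolding Ecal_def xn using sums_unique[OF ts] sums_unique[OF t2] unfolding t_def by simp
    also have "\<dots> > 1"
    proof -
      define p where "p = 1/(1-r)"
      define q where "q = 1/(1-r^2)"
      have d1: "1 - r \<noteq> 0" "1 - r^2 \<noteq> 0" using r r2 by auto
      have pp: "0 < 1 - r" "0 < 1 - r^2" using r r2 by auto
      have e1: "p*(1-r) = 1" unfolding p_def using d1 by simp
      have e2: "q*(1-r^2) = 1" unfolding q_def using d1 by simp
      have e3: "(1 + r*p)*(1-r) = 1" using e1 by (simp add: algebra_simps)
      have "((2 * p + -2) + (1/(1+0) + r*p) * (4 * r^2 * q) - 1) * ((1-r)*(1-r^2))
          = 2*(p*(1-r))*(1-r^2) - 3*(1-r)*(1-r^2) + 4*r^2*((1 + r*p)*(1-r))*(q*(1-r^2))"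
        by (simp add: algebra_simps)
      also have "\<dots> = 2*(1-r^2) - 3*(1-r)*(1-r^2) + 4*r^2" unfolding e1 e2 e3 by simp
      also have "\<dots> = -(3*r^3 - 5*r^2 - 3*r + 1)" by (simp add: algebra_simps power2_eq_square power3_eq_cube)
      also have "\<dots> > 0" using cubic_neg[OF R r] by simp
      finally have pos: "0 < ((2 * p + -2) + (1/(1+0) + r*p) * (4 * r^2 * q) - 1) * ((1-r)*(1-r^2))" .
      have "0 < (2 * p + -2) + (1/(1+0) + r*p) * (4 * r^2 * q) - 1"
        using zero_less_mult_pos2[OF pos] pp by simp
      thus ?thesis unfolding p_def q_def by simp
    qed
    finally show False using E by simp
  qed
  show ?thesis
  proof (intro exI conjI)
    show "slice_regular_series a" by (rule sr)
    show "\<forall>x. onorm x < 1 \<longrightarrow> ore (oseries a x) \<le> 1" by (rule re)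
    show "a 0 = oct_of_real 0" unfolding a_def d_def by simp
    show "onorm x = r" by (rule xn)
    show "\<not> Ecal_le_1 a 0 x" by (rule notle)
  qed simp_all
qed


theorem theorem1p6:
  fixes R :: real
  assumes R_root: "0 < R" "R < 1" "3 * R^3 - 5 * R^2 - 3 * R + 1 = 0"
  shows
    "(\<forall>(a :: nat \<Rightarrow> octo) (a0 :: real).
        slice_regular_series a
        \<and> (\<forall>x. onorm x < 1 \<longrightarrow> ore (oseries a x) \<le> 1)
        \<and> a 0 = oct_of_real a0 \<and> 0 \<le> a0 \<and> a0 < 1
        \<longrightarrow> (\<forall>x. onorm x < 1 \<and> onorm x \<le> R \<longrightarrow> Ecal_le_1 a a0 x))
     \<and> (\<forall>r. R < r \<and> r < 1 \<longrightarrow>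
        (\<exists>(a :: nat \<Rightarrow> octo) (a0 :: real).
           slice_regular_series a
           \<and> (\<forall>x. onorm x < 1 \<longrightarrow> ore (oseries a x) \<le> 1)
           \<and> a 0 = oct_of_real a0 \<and> 0 \<le> a0 \<and> a0 < 1
           \<and> (\<exists>x. onorm x = r \<and> \<not> Ecal_le_1 a a0 x)))"
proof (intro conjI allI impI)
  fix a :: "nat \<Rightarrow> octo" and a0 :: real and x :: octo
  assume h: "slice_regular_series a
        \<and> (\<forall>x. onorm x < 1 \<longrightarrow> ore (oseries a x) \<le> 1)
        \<and> a 0 = oct_of_real a0 \<and> 0 \<le> a0 \<and> a0 < 1"
    and hx: "onorm x < 1 \<and> onorm x \<le> R"
  show "Ecal_le_1 a a0 x"
    by (rule part1[OF R_root]) (use h hx in auto)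
next
  fix r :: real assume "R < r \<and> r < 1"
  thus "\<exists>(a :: nat \<Rightarrow> octo) (a0 :: real).
           slice_regular_series a
           \<and> (\<forall>x. onorm x < 1 \<longrightarrow> ore (oseries a x) \<le> 1)
           \<and> a 0 = oct_of_real a0 \<and> 0 \<le> a0 \<and> a0 < 1
           \<and> (\<exists>x. onorm x = r \<and> \<not> Ecal_le_1 a a0 x)"
    using part2[OF R_root] by blast
qed

end
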